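(* Let $n\ge 3$ and let $\mathcal M=\Delta^{n-1}_{>0}=\{q\in\mathbb R^n: q_i>0,\ \sum_i q_i=1\}$ be the open probability simplex with Fisher--Rao metric $g_F(q)[v,w]=\sum_{i=1}^n v_iw_i/q_i$ for $v,w\in T_q\mathcal M=\{v\in\mathbb R^n:\sum_i v_i=0\}$. Let $\widehat V\in\mathrm{End}(\mathbb R^n)$ and decompose $\widehat V=\widehat S+\widehat F$ with $\widehat S^\top=\widehat S$, $\widehat F^\top=-\widehat F$. For any $\widehat W\in\mathrm{End}(\mathbb R^n)$ let $\mathcal T(\widehat W)\in\Omega^1(\mathcal M)$ denote the pullback $\iota^*\big(\bar\alpha^{\widehat W}|_{\mathbb S^{n-1}_+}\big)$, where $\bar\alpha^{\widehat W}$ is the $1$-form on the unit sphere $\mathbb S^{n-1}\subset\mathbb R^n$ given by $\bar\alpha^{\widehat W}_\rho(\eta)=\langle \eta,(I-\rho\rho^\top)\widehat W\rho\rangle$ for $\eta\in T_\rho\mathbb S^{n-1}$, $\mathbb S^{n-1}_+=\{\rho\in\mathbb S^{n-1}:\rho_i>0\ \forall i\}$, and $\iota:\mathcal M\to\mathbb S^{n-1}_+$, $\iota(q)=\sqrt q=(\sqrt{q_1},\dots,\sqrt{q_n})$. Set $\beta=\mathcal T(\widehat V)$, $\beta^{\widehat S}=\mathcal T(\widehat S)$, $\beta^{\widehat F}=\mathcal T(\widehat F)$, so that $\beta=\beta^{\widehat S}+\beta^{\widehat F}$. Then: (1) the smooth function $U(q):=\tfrac12(\sqrt q)^\top\widehat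 S\sqrt q$ on $\mathcal M$ satisfies $\beta^{\widehat S}=dU$; (2) there exists $\gamma\in\Omega^2(\mathcal M)$ such that $\beta^{\widehat F}=\delta_{g_F}\gamma$, where $\delta_{g_F}$ is the codifferential of $g_F$. Consequently $\beta=dU+\delta_{g_F}\gamma$.
   Context: $\langle\cdot,\cdot\rangle$ is the Euclidean inner product on $\mathbb R^n$. The sphere $\mathbb S^{n-1}$ carries the round metric induced by $\langle\cdot,\cdot\rangle$. *)

theory Defs
  imports "HOL-Analysis.Analysis"
begin

fun Ck_on :: "nat \<Rightarrow> 'a::euclidean_space set \<Rightarrow> ('a \<Rightarrow> real) \<Rightarrow> bool" where
  "Ck_on 0 S f = continuous_on S f"
| "Ck_on (Suc k) S f =
     (f differentiable_on S \<and>
      (\<forall>i\<in>Basis. Ck_on k S (\<lambda>x. frechet_derivative f (at x) i)))"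

definition smooth_on :: "'a::euclidean_space set \<Rightarrow> ('a \<Rightarrow> real) \<Rightarrow> bool" where
  "smooth_on S f \<longleftrightarrow> (\<forall>k. Ck_on k S f)"

definition prob_simplex :: "(real^'n) set" where
  "prob_simplex = {q. (\<forall>i. 0 < q$i) \<and> sum (\<lambda>i. q$i) UNIV = 1}"

definition tangent_space :: "(real^'n) set" where
  "tangent_space = {v. sum (\<lambda>i. v$i) UNIV = 0}"

definition sqrtv :: "real^'n \<Rightarrow> real^'n" where
  "sqrtv q = (\<chi> i. sqrt (q$i))"

definition alpha_bar :: "real^'n^'n \<Rightarrow> real^'n \<Rightarrow> real^'n \<Rightarrow> real" where
  "alpha_bar W \<rho> \<eta> = \<eta> \<bullet> (W *v \<rho> - (\<rho> \<bullet> (W *v \<rho>)) *\<^sub>R \<rho>)"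

definition pullback_form :: "real^'n^'n \<Rightarrow> real^'n \<Rightarrow> real^'n \<Rightarrow> real" where
  "pullback_form W q v = alpha_bar W (sqrtv q) (frechet_derivative sqrtv (at q) v)"

definition sym_part :: "real^'n^'n \<Rightarrow> real^'n^'n" where
  "sym_part V = (1/2) *\<^sub>R (V + transpose V)"

definition skew_part :: "real^'n^'n \<Rightarrow> real^'n^'n" where
  "skew_part V = (1/2) *\<^sub>R (V - transpose V)"

definition fisher_metric :: "real^'n \<Rightarrow> real^'n \<Rightarrow> real^'n \<Rightarrow> real" where
  "fisher_metric q v w = (\<Sum>i\<in>UNIV. v$i * w$i / q$i)"

section \<open>Global chart of the simplex: R^n = R^('m::finite option), coordinates q_(Some k), k :: 'm\<close>

definition chart :: "real^('m::finite) \<Rightarrow> real^('m::finite option)" where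
  "chart x = (\<chi> j. case j of None \<Rightarrow> 1 - sum (\<lambda>k. x$k) UNIV | Some k \<Rightarrow> x$k)"

definition chart_inv :: "real^('m::finite option) \<Rightarrow> real^('m::finite)" where
  "chart_inv q = (\<chi> k. q $ Some k)"

definition chart_domain :: "(real^('m::finite)) set" where
  "chart_domain = {x. (\<forall>k. 0 < x$k) \<and> sum (\<lambda>k. x$k) UNIV < 1}"

text \<open>Coordinate vector fields d/dx_k = E_(Some k) - E_None.\<close>
definition cbasis :: "'m \<Rightarrow> real^('m::finite option)" where
  "cbasis k = axis (Some k) 1 - axis None 1"

definition metric_coords :: "real^('m::finite) \<Rightarrow> real^('m::finite)^'m" where
  "metric_coords x = (\<chi> a b. fisher_metric (chart x) (cbasis a) (cbasis b))"

text \<open>2-forms on the prob_simplex: at each q an alternating bilinear form (given on R^n,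
  only its restriction to the tangent space matters), smooth in the chart.\<close>
definition form2_coords ::
  "(real^('m::finite option) \<Rightarrow> real^('m::finite option) \<Rightarrow> real^('m::finite option) \<Rightarrow> real) \<Rightarrow> real^('m::finite) \<Rightarrow> real^('m::finite)^'m" where
  "form2_coords \<gamma> x = (\<chi> a b. \<gamma> (chart x) (cbasis a) (cbasis b))"

definition is_2form ::
  "(real^('m::finite option) \<Rightarrow> real^('m::finite option) \<Rightarrow> real^('m::finite option) \<Rightarrow> real) \<Rightarrow> bool" where
  "is_2form \<gamma> \<longleftrightarrow>
     (\<forall>q\<in>prob_simplex. bilinear (\<gamma> q) \<and> (\<forall>v w. \<gamma> q v w = - \<gamma> q w v)) \<and>
     (\<forall>a b. smooth_on chart_domain (\<lambda>x. form2_coords \<gamma> x $ a $ b))"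

text \<open>Codifferential of a 2-form in coordinates:
  (delta gamma)^j = - (1/sqrt(det g)) sum_k d_k( sqrt(det g) gamma^(kj) ),
  (delta gamma)_i = g_ij (delta gamma)^j, with gamma^(kj) = g^(ka) gamma_ab g^(jb).\<close>
definition codiff2_coords ::
  "(real^('m::finite option) \<Rightarrow> real^('m::finite option) \<Rightarrow> real^('m::finite option) \<Rightarrow> real) \<Rightarrow> real^('m::finite) \<Rightarrow> real^('m::finite)" where
  "codiff2_coords \<gamma> x =
     (let vol = (\<lambda>y. sqrt (det (metric_coords y)));
          up = (\<lambda>y. matrix_inv (metric_coords y) ** form2_coords \<gamma> y
                        ** transpose (matrix_inv (metric_coords y)));
          vup = (\<chi> j. - (1 / vol x) *
                   (\<Sum>k\<in>UNIV. frechet_derivative (\<lambda>y. vol y * up y $ k $ j) (at x) (axis k 1)))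
      in metric_coords x *v vup)"

text \<open>The 1-form delta gamma at q, on a tangent vector v = sum_k v_(Some k) cbasis k.\<close>
definition codiff2 ::
  "(real^('m::finite option) \<Rightarrow> real^('m::finite option) \<Rightarrow> real^('m::finite option) \<Rightarrow> real)
     \<Rightarrow> real^('m::finite option) \<Rightarrow> real^('m::finite option) \<Rightarrow> real" where
  "codiff2 \<gamma> q v = (\<Sum>a\<in>UNIV. codiff2_coords \<gamma> (chart_inv q) $ a * v $ Some a)"

end

theory Submission
  imports Defs
begin


lemma Ck_cong:
  fixes S :: "'a::euclidean_space set"
  assumes "open S" "\<And>x. x \<in> S \<Longrightarrow> f x = g x" "Ck_on k S f"
  shows "Ck_on k S g"
  using assms(2,3)
proof (induction k arbitrary: f g)
  case 0
  then show ?case using continuous_on_cong by force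
next
  case (Suc k)
  have d: "f differentiable_on S" and c: "\<forall>i\<in>Basis. Ck_on k S (\<lambda>x. frechet_derivative f (at x) i)"
    using Suc.prems by auto
  have fd: "f differentiable at x" if "x \<in> S" for x
    using d that assms(1) by (simp add: differentiable_on_eq_differentiable_at)
  have gd: "g differentiable at x" if "x \<in> S" for x
    using fd[OF that] assms(1) that Suc.prems(1)
    by (meson differentiable_def has_derivative_transform_within_open)
  have eq: "frechet_derivative f (at x) = frechet_derivative g (at x)" if "x \<in> S" for x
    using frechet_derivative_transform_within_open[OF fd[OF that] assms(1) that] Suc.prems(1) by blast
  have "Ck_on k S (\<lambda>x. frechet_derivative g (at x) i)" if "i \<in> Basis" for i
    by (rule Suc.IH[of "\<lambda>x. frechet_derivative f (at x) i"]) (use eq c that in auto)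
  then show ?case
    using gd assms(1)
    by (auto simp: differentiable_on_eq_differentiable_at)
qed

lemma Ck_derivI:
  fixes S :: "'a::euclidean_space set"
  assumes "open S" "\<And>x. x \<in> S \<Longrightarrow> (f has_derivative D x) (at x)"
    "\<And>i. i \<in> Basis \<Longrightarrow> Ck_on k S (\<lambda>x. D x i)"
  shows "Ck_on (Suc k) S f"
proof -
  have "f differentiable_on S"
    using assms(1,2) by (auto simp: differentiable_on_eq_differentiable_at differentiable_def)
  moreover have "Ck_on k S (\<lambda>x. frechet_derivative f (at x) i)" if "i \<in> Basis" for i
    by (rule Ck_cong[OF assms(1) _ assms(3)[OF that]]) (metis assms(2) frechet_derivative_at)
  ultimately show ?thesis by simp
qed

lemma Ck_derivD:
  fixes S :: "'a::euclidean_space set"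
  assumes "open S" "Ck_on (Suc k) S f" "x \<in> S"
  shows "(f has_derivative frechet_derivative f (at x)) (at x)"
  using assms by (auto simp: differentiable_on_eq_differentiable_at frechet_derivative_works)

lemma Ck_mono:
  fixes S :: "'a::euclidean_space set"
  shows "Ck_on (Suc k) S f \<Longrightarrow> Ck_on k S f"
proof (induction k arbitrary: f)
  case 0
  then show ?case by (simp add: differentiable_imp_continuous_on)
next
  case (Suc k)
  then show ?case by auto
qed

lemma Ck_const:
  fixes S :: "'a::euclidean_space set"
  assumes "open S" shows "Ck_on k S (\<lambda>x. c)"
proof (induction k arbitrary: c)
  case 0 then show ?case by simp
next
  case (Suc k)
  show ?case by (rule Ck_derivI[OF assms, where D="\<lambda>x h. 0"]) (auto intro: Suc.IH)
qed

lemma Ck_linear: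
  fixes S :: "'a::euclidean_space set"
  assumes "open S" "bounded_linear f" shows "Ck_on k S f"
proof (cases k)
  case 0 then show ?thesis using assms(2) by (simp add: linear_continuous_on)
next
  case (Suc k')
  show ?thesis unfolding Suc
    by (rule Ck_derivI[OF assms(1), where D="\<lambda>x. f"])
       (auto intro: Ck_const[OF assms(1)] bounded_linear_imp_has_derivative assms(2))
qed

lemma Ck_add:
  fixes S :: "'a::euclidean_space set"
  assumes "open S" shows "Ck_on k S f \<Longrightarrow> Ck_on k S g \<Longrightarrow> Ck_on k S (\<lambda>x. f x + g x)"
proof (induction k arbitrary: f g)
  case 0 then show ?case by (simp add: continuous_on_add)
next
  case (Suc k)
  show ?case
    by (rule Ck_derivI[OF assms, where D="\<lambda>x h. frechet_derivative f (at x) h + frechet_derivative g (at x) h"])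
       (use Suc in \<open>auto intro!: has_derivative_add Ck_derivD[OF assms]\<close>)
qed

lemma Ck_mult:
  fixes S :: "'a::euclidean_space set"
  assumes "open S" shows "Ck_on k S f \<Longrightarrow> Ck_on k S g \<Longrightarrow> Ck_on k S (\<lambda>x. f x * g x)"
proof (induction k arbitrary: f g)
  case 0 then show ?case by (simp add: continuous_on_mult)
next
  case (Suc k)
  show ?case
  proof (rule Ck_derivI[OF assms, where D="\<lambda>x h. f x * frechet_derivative g (at x) h + frechet_derivative f (at x) h * g x"])
    show "(\<And>x. x \<in> S \<Longrightarrow> ((\<lambda>x. f x * g x) has_derivative (\<lambda>h. f x * frechet_derivative g (at x) h + frechet_derivative f (at x) h * g x)) (at x))"
      using Suc.prems by (auto intro!: has_derivative_mult Ck_derivD[OF assms])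
    fix i :: 'a assume i: "i \<in> Basis"
    have f: "Ck_on k S f" "Ck_on k S g" using Suc.prems Ck_mono by blast+
    have d: "Ck_on k S (\<lambda>x. frechet_derivative f (at x) i)" "Ck_on k S (\<lambda>x. frechet_derivative g (at x) i)"
      using Suc.prems i by auto
    show "Ck_on k S (\<lambda>x. f x * frechet_derivative g (at x) i + frechet_derivative f (at x) i * g x)"
      by (intro Ck_add[OF assms] Suc.IH f d)
  qed
qed

lemma Ck_inverse:
  fixes S :: "'a::euclidean_space set"
  assumes "open S" shows "Ck_on k S f \<Longrightarrow> (\<And>x. x \<in> S \<Longrightarrow> f x \<noteq> 0) \<Longrightarrow> Ck_on k S (\<lambda>x. inverse (f x))"
proof (induction k arbitrary: f)
  case 0 then show ?case by (simp add: continuous_on_inverse)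
next
  case (Suc k)
  have i: "Ck_on k S (\<lambda>x. inverse (f x))" using Suc Ck_mono by blast
  have e: "(\<lambda>x. - (inverse (f x) ^ Suc (Suc 0))) = (\<lambda>x. (-1) * (inverse (f x) * inverse (f x)))"
    by auto
  have c2: "Ck_on k S (\<lambda>x. - (inverse (f x) ^ Suc (Suc 0)))"
    unfolding e by (intro Ck_mult[OF assms] Ck_const[OF assms] i)
  show ?case
  proof (rule Ck_derivI[OF assms, where D="\<lambda>x h. frechet_derivative f (at x) h * - (inverse (f x) ^ Suc (Suc 0))"])
    fix x assume "x \<in> S"
    then show "((\<lambda>x. inverse (f x)) has_derivative (\<lambda>h. frechet_derivative f (at x) h * - (inverse (f x) ^ Suc (Suc 0)))) (at x)"
      using Suc.prems by (intro DERIV_compose_FDERIV DERIV_inverse Ck_derivD[OF assms]) auto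
  next
    fix i :: 'a assume "i \<in> Basis"
    then have "Ck_on k S (\<lambda>x. frechet_derivative f (at x) i)" using Suc.prems by auto
    then show "Ck_on k S (\<lambda>x. frechet_derivative f (at x) i * - (inverse (f x) ^ Suc (Suc 0)))"
      by (intro Ck_mult[OF assms] c2)
  qed
qed

lemma Ck_sqrt:
  fixes S :: "'a::euclidean_space set"
  assumes "open S" shows "Ck_on k S f \<Longrightarrow> (\<And>x. x \<in> S \<Longrightarrow> f x > 0) \<Longrightarrow> Ck_on k S (\<lambda>x. sqrt (f x))"
proof (induction k arbitrary: f)
  case 0 then show ?case by (simp add: continuous_on_real_sqrt)
next
  case (Suc k)
  have i: "Ck_on k S (\<lambda>x. sqrt (f x))" using Suc Ck_mono by blast
  have e: "(\<lambda>x. inverse (sqrt (f x)) / 2) = (\<lambda>x. inverse (sqrt (f x)) * (1/2))"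
    by auto
  have c2: "Ck_on k S (\<lambda>x. inverse (sqrt (f x)) / 2)"
    unfolding e using Suc.prems(2) by (intro Ck_mult[OF assms] Ck_const[OF assms] Ck_inverse[OF assms] i) force+
  show ?case
  proof (rule Ck_derivI[OF assms, where D="\<lambda>x h. frechet_derivative f (at x) h * (inverse (sqrt (f x)) / 2)"])
    fix x assume "x \<in> S"
    then show "((\<lambda>x. sqrt (f x)) has_derivative (\<lambda>h. frechet_derivative f (at x) h * (inverse (sqrt (f x)) / 2))) (at x)"
      using Suc.prems by (intro DERIV_compose_FDERIV DERIV_real_sqrt Ck_derivD[OF assms]) auto
  next
    fix i :: 'a assume "i \<in> Basis"
    then have "Ck_on k S (\<lambda>x. frechet_derivative f (at x) i)" using Suc.prems by auto
    then show "Ck_on k S (\<lambda>x. frechet_derivative f (at x) i * (inverse (sqrt (f x)) / 2))"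
      by (intro Ck_mult[OF assms] c2)
  qed
qed

lemma Ck_sum:
  fixes S :: "'a::euclidean_space set"
  assumes "open S" "finite I" "\<And>i. i \<in> I \<Longrightarrow> Ck_on k S (f i)"
  shows "Ck_on k S (\<lambda>x. \<Sum>i\<in>I. f i x)"
  using assms(2,3)
  by (induction I rule: finite_induct) (auto intro!: Ck_add[OF assms(1)] Ck_const[OF assms(1)])

lemma Ck_prod:
  fixes S :: "'a::euclidean_space set"
  assumes "open S" "finite I" "\<And>i. i \<in> I \<Longrightarrow> Ck_on k S (f i)"
  shows "Ck_on k S (\<lambda>x. \<Prod>i\<in>I. f i x)"
  using assms(2,3)
  by (induction I rule: finite_induct) (auto intro!: Ck_mult[OF assms(1)] Ck_const[OF assms(1)])



lemma sum_opt: "(\<Sum>i\<in>(UNIV::'m::finite option set). f i) = f None + (\<Sum>k\<in>UNIV. f (Some k))"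
  by (simp add: UNIV_option_conv sum.reindex)

lemma prod_opt: "(\<Prod>i\<in>(UNIV::'m::finite option set). f i) = f None * (\<Prod>k\<in>UNIV. f (Some k))"
  by (simp add: UNIV_option_conv prod.reindex)

definition drow :: "('n::finite \<Rightarrow> real) \<Rightarrow> 'n \<Rightarrow> real^'n" where
  "drow d i = (\<chi> j. if i = j then d i else 0)"

lemma det_base:
  fixes w :: "real^'n::finite"
  shows "det (\<chi> i. if i = z then w else drow d i) = w$z * (\<Prod>i\<in>UNIV-{z}. d i)"
proof -
  let ?A = "(\<chi> i. if i = z then w else drow d i) :: real^'n^'n"
  have zero: "(\<Prod>i\<in>UNIV. ?A$i$(p i)) = 0" if p: "p permutes UNIV" "p \<noteq> id" for p
  proof -
    obtain i where i: "p i \<noteq> i" using p(2) by (metis eq_id_iff)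
    have "\<exists>j. j \<noteq> z \<and> p j \<noteq> j"
    proof (cases "i = z")
      case True
      have "p (p z) \<noteq> p z" using i True permutes_inj[OF p(1)] by (metis injD)
      then show ?thesis using True i by metis
    next
      case False then show ?thesis using i by blast
    qed
    then obtain j where j: "j \<noteq> z" "p j \<noteq> j" by blast
    have "?A$j$(p j) = 0" using j by (simp add: drow_def)
    then show ?thesis by (meson finite UNIV_I prod_zero)
  qed
  have "det ?A = (\<Sum>p\<in>{p. p permutes UNIV}. if p = id then of_int (sign p) * (\<Prod>i\<in>UNIV. ?A$i$(p i)) else 0)"
    unfolding det_def by (rule sum.cong) (use zero in auto)
  also have "\<dots> = (\<Prod>i\<in>UNIV. ?A$i$i)"
    by (simp add: sum.delta'[where a=id] permutes_id sign_id del: vec_lambda_beta)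
  also have "\<dots> = ?A$z$z * (\<Prod>i\<in>UNIV-{z}. ?A$i$i)"
    by (rule prod.remove) auto
  also have "\<dots> = w$z * (\<Prod>i\<in>UNIV-{z}. d i)"
    by (auto intro!: prod.cong simp: drow_def)
  finally show ?thesis .
qed

lemma det_K:
  fixes w :: "real^'n::finite"
  assumes "z \<notin> T"
  shows "det (\<chi> i. if i = z then w else if i \<in> T then drow d i + w else drow d i) = w$z * (\<Prod>i\<in>UNIV-{z}. d i)"
  using finite[of T] assms
proof (induction T rule: finite_induct)
  case empty
  have "(\<chi> i. if i = z then w else if i \<in> {} then drow d i + w else drow d i) = (\<chi> i. if i = z then w else drow d i)"
    by (simp add: vec_eq_iff)
  then show ?case using det_base[of z w d] by simp
next
  case (insert t T)
  let ?C = "\<lambda>i. if i = z then w else if i \<in> T then drow d i + w else drow d i"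
  have tz: "t \<noteq> z" using insert by auto
  have e: "(\<chi> i. if i = z then w else if i \<in> insert t T then drow d i + w else drow d i)
     = (\<chi> i. if i = t then drow d i + w else ?C i)"
    using tz by (auto simp: vec_eq_iff)
  have e1: "(\<chi> i. if i = t then drow d i else ?C i) = (\<chi> i. ?C i)"
    using insert tz by (auto simp: vec_eq_iff)
  have e2: "det (\<chi> i. if i = t then w else ?C i) = 0"
    by (rule det_identical_rows[OF tz]) (use tz in \<open>simp add: row_def vec_eq_iff\<close>)
  show ?case
    unfolding e det_row_add e1 e2 using insert by simp
qed

lemma det_M:
  fixes w :: "real^'n::finite"
  shows "det (\<chi> i. if i \<in> T then drow d i + w else drow d i) = (\<Prod>i\<in>UNIV. d i) + (\<Sum>k\<in>T. w$k * (\<Prod>i\<in>UNIV-{k}. d i))"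
  using finite[of T]
proof (induction T rule: finite_induct)
  case empty
  have "det (\<chi> i. drow d i) = (\<Prod>i\<in>UNIV. d i)"
    by (subst det_diagonal) (auto simp: drow_def)
  then show ?case by simp
next
  case (insert z T)
  let ?C = "\<lambda>i. if i \<in> T then drow d i + w else drow d i"
  have e: "(\<chi> i. if i \<in> insert z T then drow d i + w else drow d i)
     = (\<chi> i. if i = z then drow d i + w else ?C i)"
    by (auto simp: vec_eq_iff)
  have e1: "(\<chi> i. if i = z then drow d i else ?C i) = (\<chi> i. ?C i)"
    using insert by (auto simp: vec_eq_iff)
  have e2: "det (\<chi> i. if i = z then w else ?C i) = w$z * (\<Prod>i\<in>UNIV-{z}. d i)"
    using det_K[of z T w d] insert by simp
  show ?case
    unfolding e det_row_add e1 e2 using insert by simp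
qed

lemma det_diag_plus:
  fixes w :: "real^'n::finite"
  shows "det (\<chi> i j. (if i = j then d i else 0) + w$j) = (\<Prod>i\<in>UNIV. d i) + (\<Sum>k\<in>UNIV. w$k * (\<Prod>i\<in>UNIV-{k}. d i))"
proof -
  have "(\<chi> i j. (if i = j then d i else 0) + w$j) = (\<chi> i. if i \<in> UNIV then drow d i + w else drow d i)"
    by (auto simp: vec_eq_iff drow_def)
  then show ?thesis using det_M[of UNIV d w] by simp
qed



lemma chart_Some [simp]: "chart y $ Some k = y $ k"
  by (simp add: chart_def)
lemma chart_None: "chart y $ None = 1 - (\<Sum>k\<in>UNIV. y $ k)"
  by (simp add: chart_def)

lemma cbasis_Some [simp]: "cbasis a $ Some c = (if c = a then 1 else 0)"
  by (simp add: cbasis_def axis_def)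
lemma cbasis_None [simp]: "cbasis a $ None = -1"
  by (simp add: cbasis_def axis_def)

lemma metric_formula:
  "metric_coords y $ a $ b = (if a = b then 1 / y$a else 0) + 1 / chart y $ None"
proof -
  have "(\<Sum>k\<in>UNIV. (if k = a then if k = b then 1 else 0 else 0) / y $ k) = (if a = b then 1 / y$a else 0)"
    by (cases "a = b") (auto simp: if_distrib[of "\<lambda>x. x / _"] cong: if_cong)
  then show ?thesis unfolding metric_coords_def fisher_metric_def
    by (simp add: sum_opt if_distrib[of "\<lambda>x. x * _"] sum.If_cases)
qed

lemma chart_domain_pos:
  assumes "y \<in> chart_domain"
  shows "\<And>i. chart y $ i > 0"
proof -
  fix i show "chart y $ i > 0"
    using assms by (cases i) (auto simp: chart_domain_def chart_None)
qed

lemma sqrt_prod: "finite I \<Longrightarrow> sqrt (\<Prod>i\<in>I. f i) = (\<Prod>i\<in>I. sqrt (f i))"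
  by (induction I rule: finite_induct) (auto simp: real_sqrt_mult)

lemma det_metric:
  assumes y: "y \<in> chart_domain"
  shows "det (metric_coords y) = 1 / (\<Prod>i\<in>UNIV. chart y $ i)"
proof -
  let ?c = "1 / chart y $ None"
  have pos: "\<And>i. chart y $ i > 0" using chart_domain_pos[OF y] .
  have ypos: "\<And>k. y $ k > 0" using pos[of "Some _"] by simp
  have "metric_coords y = (\<chi> i j. (if i = j then 1 / y$i else 0) + (\<chi> j. ?c) $ j)"
    by (auto simp: vec_eq_iff metric_formula)
  then have "det (metric_coords y) = (\<Prod>i\<in>UNIV. 1 / y$i) + (\<Sum>k\<in>UNIV. ?c * (\<Prod>i\<in>UNIV-{k}. 1 / y$i))"
    using det_diag_plus[of "\<lambda>i. 1 / y$i" "\<chi> j. ?c"] by simp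
  moreover have pr: "(\<Prod>i\<in>UNIV-{k}. 1 / y$i) = y$k * (\<Prod>i\<in>UNIV. 1 / y$i)" for k
  proof -
    have "(\<Prod>i\<in>UNIV. 1 / y$i) = 1 / y$k * (\<Prod>i\<in>UNIV-{k}. 1 / y$i)"
      by (rule prod.remove) auto
    then show "(\<Prod>i\<in>UNIV-{k}. 1 / y$i) = y$k * (\<Prod>i\<in>UNIV. 1 / y$i)" using ypos[of k] by simp
  qed
  ultimately have "det (metric_coords y) = (\<Prod>i\<in>UNIV. 1 / y$i) * (1 + ?c * (\<Sum>k\<in>UNIV. y$k))"
    by (simp add: sum_distrib_left sum_distrib_right algebra_simps sum_divide_distrib)
  also have "1 + ?c * (\<Sum>k\<in>UNIV. y$k) = ?c"
    using pos[of None] by (simp add: chart_None field_simps)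
  finally show ?thesis
    by (simp add: prod_opt prod_dividef)
qed

definition Phi :: "real^'m::finite \<Rightarrow> real" where
  "Phi y = (\<Prod>i\<in>UNIV. inverse (sqrt (chart y $ i)))"

lemma vol_eq:
  assumes y: "y \<in> chart_domain"
  shows "sqrt (det (metric_coords y)) = Phi y" "Phi y > 0"
proof -
  have pos: "\<And>i. chart y $ i > 0" using chart_domain_pos[OF y] .
  show "sqrt (det (metric_coords y)) = Phi y"
    unfolding det_metric[OF y] Phi_def
    by (simp add: real_sqrt_inverse sqrt_prod prod_inversef[symmetric] divide_inverse)
  show "Phi y > 0" unfolding Phi_def using pos by (auto intro: prod_pos)
qed

lemma invertible_metric:
  assumes y: "y \<in> chart_domain"
  shows "invertible (metric_coords y)"
proof -
  have pos: "\<And>i. chart y $ i > 0" using chart_domain_pos[OF y] .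
  then have "(\<Prod>i\<in>UNIV. chart y $ i) > 0" by (auto intro: prod_pos)
  then have "1 / (\<Prod>i\<in>UNIV. chart y $ i) \<noteq> 0" by (metis divide_eq_0_iff less_numeral_extra(3) zero_neq_one)
  then show ?thesis unfolding invertible_det_nz det_metric[OF y] .
qed

lemma matrix_inv_left:
  assumes "invertible (A :: real^'n::finite^'n)"
  shows "matrix_inv A ** A = mat 1"
  using assms unfolding invertible_def matrix_inv_def by (metis (mono_tags, lifting) someI_ex)



lemma open_chart_domain: "open (chart_domain :: (real^'m::finite) set)"
proof -
  have "chart_domain = (\<Inter>k\<in>UNIV. {x::real^'m. 0 < x$k}) \<inter> {x. (\<Sum>k\<in>UNIV. x$k) < 1}"
    by (auto simp: chart_domain_def)
  moreover have "open {x::real^'m. (\<Sum>k\<in>UNIV. x$k) < 1}"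
    by (intro open_Collect_less continuous_intros)
  moreover have "open (\<Inter>k\<in>UNIV. {x::real^'m. 0 < x$k})"
    by (rule open_INT) (auto simp: open_halfspace_component_gt_cart)
  ultimately show ?thesis by (metis open_Int)
qed

lemma has_derivative_nth: "((\<lambda>y::real^'n. y $ i) has_derivative (\<lambda>h. h $ i)) (at x)"
  by (rule bounded_linear_imp_has_derivative[OF bounded_linear_vec_nth])

lemma DERIV_inv_sqrt: "t > 0 \<Longrightarrow> DERIV (\<lambda>t. inverse (sqrt t)) t :> - (inverse (sqrt t) ^ 2 * (inverse (sqrt t) / 2))"
  by (auto intro!: derivative_eq_intros simp: power2_eq_square)

definition Amat :: "real^'m::finite \<Rightarrow> 'm \<Rightarrow> 'm \<Rightarrow> real" where
  "Amat y k j = (\<Prod>i\<in>UNIV-{k,j}. inverse (sqrt (y$i)))"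

definition Lmat :: "real^('m::finite option)^('m option) \<Rightarrow> real^'m \<Rightarrow> 'm \<Rightarrow> 'm \<Rightarrow> real" where
  "Lmat F y k j = - sqrt (chart y $ None) * F$Some k$Some j
     + (F$None$Some j * sqrt (y$k) - F$None$Some k * sqrt (y$j)) / (real CARD('m) - 1)"

definition Pmat :: "real^('m::finite option)^('m option) \<Rightarrow> real^'m \<Rightarrow> real^'m^'m" where
  "Pmat F y = (\<chi> k j. Amat y k j * Lmat F y k j)"

lemma Amat_deriv:
  assumes x: "x \<in> chart_domain"
  shows "\<exists>DA. ((\<lambda>y. Amat y k j) has_derivative DA) (at x) \<and> DA (axis k 1) = 0"
proof -
  have pos: "\<And>i. x $ i > 0" using chart_domain_pos[OF x, of "Some _"] by simp
  let ?c = "\<lambda>i. - (inverse (sqrt (x$i)) ^ 2 * (inverse (sqrt (x$i)) / 2))"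
  have d: "((\<lambda>y. inverse (sqrt (y$i))) has_derivative (\<lambda>h. h$i * ?c i)) (at x)" for i
    by (rule DERIV_compose_FDERIV[OF DERIV_inv_sqrt[OF pos] has_derivative_nth])
  have "((\<lambda>y. Amat y k j) has_derivative
     (\<lambda>h. \<Sum>i\<in>UNIV-{k,j}. h$i * ?c i * (\<Prod>l\<in>UNIV-{k,j}-{i}. inverse (sqrt (x$l))))) (at x)"
    unfolding Amat_def by (rule has_derivative_prod) (rule d)
  moreover have "(\<Sum>i\<in>UNIV-{k,j}. axis k 1 $ i * ?c i * (\<Prod>l\<in>UNIV-{k,j}-{i}. inverse (sqrt (x$l)))) = 0"
    by (rule sum.neutral) (auto simp: axis_def)
  ultimately show ?thesis by blast
qed

lemma sqrt0_deriv:
  assumes x: "x \<in> chart_domain"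
  shows "((\<lambda>y::real^'m::finite. sqrt (chart y $ None)) has_derivative
          (\<lambda>h. (- (\<Sum>l\<in>UNIV. h$l)) * (inverse (sqrt (chart x $ None)) / 2))) (at x)"
proof -
  have p: "chart x $ None > 0" using chart_domain_pos[OF x] .
  have l: "((\<lambda>y::real^'m. 1 - (\<Sum>l\<in>UNIV. y$l)) has_derivative (\<lambda>h. 0 - (\<Sum>l\<in>UNIV. h$l))) (at x)"
    by (intro has_derivative_diff has_derivative_const has_derivative_sum has_derivative_nth)
  have "((\<lambda>y::real^'m. sqrt (1 - (\<Sum>l\<in>UNIV. y$l))) has_derivative
          (\<lambda>h. (0 - (\<Sum>l\<in>UNIV. h$l)) * (inverse (sqrt (1 - (\<Sum>l\<in>UNIV. x$l))) / 2))) (at x)"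
    by (rule DERIV_compose_FDERIV[OF DERIV_real_sqrt l]) (use p in \<open>simp add: chart_None\<close>)
  then show ?thesis by (simp add: chart_None)
qed

lemma sqrtk_deriv:
  assumes x: "x \<in> chart_domain"
  shows "((\<lambda>y::real^'m::finite. sqrt (y $ k)) has_derivative (\<lambda>h. h$k * (inverse (sqrt (x$k)) / 2))) (at x)"
proof -
  have p: "x $ k > 0" using chart_domain_pos[OF x, of "Some k"] by simp
  show ?thesis by (rule DERIV_compose_FDERIV[OF DERIV_real_sqrt[OF p] has_derivative_nth])
qed

lemmas has_derivative_divide_const = bounded_linear.has_derivative [OF bounded_linear_divide]

lemma Lmat_deriv:
  fixes F :: "real^('m::finite option)^('m option)"
  assumes x: "x \<in> chart_domain"
  shows "((\<lambda>y. Lmat F y k j) has_derivative (\<lambda>h.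
      - ((- (\<Sum>l\<in>UNIV. h$l)) * (inverse (sqrt (chart x $ None)) / 2)) * F$Some k$Some j
      + (F$None$Some j * (h$k * (inverse (sqrt (x$k)) / 2)) - F$None$Some k * (h$j * (inverse (sqrt (x$j)) / 2)))
          / (real CARD('m) - 1))) (at x)"
  unfolding Lmat_def
  by (intro has_derivative_add has_derivative_mult_left has_derivative_minus has_derivative_divide_const
      has_derivative_diff has_derivative_mult_right sqrt0_deriv[OF x] sqrtk_deriv[OF x])

definition DLk :: "real^('m::finite option)^('m option) \<Rightarrow> real^'m \<Rightarrow> 'm \<Rightarrow> 'm \<Rightarrow> real" where
  "DLk F x k j = inverse (sqrt (chart x $ None)) / 2 * F$Some k$Some j
      + (F$None$Some j * (inverse (sqrt (x$k)) / 2) - F$None$Some k * ((if j = k then 1 else 0) * (inverse (sqrt (x$j)) / 2)))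
          / (real CARD('m) - 1)"

lemma Pmat_partial:
  fixes F :: "real^('m::finite option)^('m option)"
  assumes x: "x \<in> chart_domain"
  shows "frechet_derivative (\<lambda>y. Pmat F y $ k $ j) (at x) (axis k 1) = Amat x k j * DLk F x k j"
proof -
  obtain DA where DA: "((\<lambda>y. Amat y k j) has_derivative DA) (at x)" "DA (axis k 1) = 0"
    using Amat_deriv[OF x] by blast
  have "((\<lambda>y. Pmat F y $ k $ j) has_derivative (\<lambda>h. Amat x k j * (
      - ((- (\<Sum>l\<in>UNIV. h$l)) * (inverse (sqrt (chart x $ None)) / 2)) * F$Some k$Some j
      + (F$None$Some j * (h$k * (inverse (sqrt (x$k)) / 2)) - F$None$Some k * (h$j * (inverse (sqrt (x$j)) / 2)))
          / (real CARD('m) - 1)) + DA h * Lmat F x k j)) (at x)"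
    unfolding Pmat_def vec_lambda_beta by (intro has_derivative_mult DA(1) Lmat_deriv[OF x])
  note fc = fun_cong[OF frechet_derivative_at[OF this, symmetric], of "axis k 1"]
  have s1: "(\<Sum>l\<in>UNIV. axis k 1 $ l) = (1::real)" by (simp add: axis_def)
  show ?thesis unfolding fc DA(2) s1
    by (simp add: DLk_def axis_def)
qed

lemma skew_diag: "(\<forall>a b. F$a$b = - F$b$a) \<Longrightarrow> F$a$a = (0::real)"
proof -
  assume "\<forall>a b. F$a$b = - F$b$a"
  then have "F$a$a = - F$a$a" by blast
  then show ?thesis by linarith
qed

lemma divergence:
  fixes F :: "real^('m::finite option)^('m option)"
  assumes x: "x \<in> chart_domain" and skew: "\<forall>a b. F$a$b = - F$b$a" and card: "CARD('m) \<ge> 2"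
  shows "(\<Sum>k\<in>UNIV. Amat x k j * DLk F x k j)
     = - Phi x * (sqrt (x$j) * (\<Sum>I\<in>UNIV. F$Some j$I * sqrt (chart x $ I)) / 2)"
proof -
  define r0 where "r0 = sqrt (chart x $ None)"
  define s where "s l = sqrt (x$l)" for l
  define Psi where "Psi = (\<Prod>l\<in>UNIV. inverse (s l))"
  define c4 where "c4 = real CARD('m) - 1"
  have r0: "r0 > 0" using chart_domain_pos[OF x, of None] by (simp add: r0_def)
  have sp: "s l > 0" for l using chart_domain_pos[OF x, of "Some l"] by (simp add: s_def)
  have c4: "c4 > 0" using card by (simp add: c4_def)
  have diag: "F$a$a = 0" for a using skew_diag[OF skew] .
  have tj: "Amat x j j * DLk F x j j = 0"
    by (simp add: DLk_def diag)
  have Ak: "Amat x k j = Psi * s k * s j" if "k \<noteq> j" for k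
  proof -
    have "Psi = inverse (s k) * (\<Prod>l\<in>UNIV-{k}. inverse (s l))"
      unfolding Psi_def by (rule prod.remove) auto
    also have "(\<Prod>l\<in>UNIV-{k}. inverse (s l)) = inverse (s j) * (\<Prod>l\<in>UNIV-{k}-{j}. inverse (s l))"
      by (rule prod.remove) (use that in auto)
    also have "UNIV-{k}-{j} = UNIV-{k,j}" by auto
    finally have "Psi = inverse (s k) * inverse (s j) * Amat x k j"
      by (simp add: Amat_def s_def)
    then show ?thesis using sp[of k] sp[of j] by (simp add: field_simps)
  qed
  have tk: "Amat x k j * DLk F x k j = Psi * s j / (2 * r0) * (s k * F$Some k$Some j) + Psi * s j * F$None$Some j / (2 * c4)"
    if "k \<noteq> j" for k
    using that sp[of k] r0 c4 unfolding Ak[OF that] DLk_def r0_def[symmetric] s_def[symmetric] c4_def[symmetric]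
    by (simp add: field_simps)
  have "(\<Sum>k\<in>UNIV. Amat x k j * DLk F x k j) = (\<Sum>k\<in>UNIV-{j}. Amat x k j * DLk F x k j)"
    by (rule sum.mono_neutral_right) (auto simp: tj)
  also have "\<dots> = (\<Sum>k\<in>UNIV-{j}. Psi * s j / (2 * r0) * (s k * F$Some k$Some j) + Psi * s j * F$None$Some j / (2 * c4))"
    by (rule sum.cong) (auto simp: tk)
  also have "\<dots> = Psi * s j / (2 * r0) * (\<Sum>k\<in>UNIV-{j}. s k * F$Some k$Some j) + real (card (UNIV - {j} :: 'm set)) * (Psi * s j * F$None$Some j / (2 * c4))"
    by (simp add: sum.distrib sum_distrib_left)
  also have "real (card (UNIV - {j} :: 'm set)) = c4"
    using card by (simp add: c4_def card_Diff_singleton of_nat_diff)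
  also have "(\<Sum>k\<in>UNIV-{j}. s k * F$Some k$Some j) = (\<Sum>k\<in>UNIV. s k * F$Some k$Some j)"
    by (rule sum.mono_neutral_left) (auto simp: diag)
  also have "\<dots> = - (\<Sum>k\<in>UNIV. F$Some j$Some k * s k)"
  proof -
    have "s k * F$Some k$Some j = - (F$Some j$Some k * s k)" for k
      using skew[rule_format, of "Some k" "Some j"] by simp
    then show ?thesis by (simp add: sum_negf[symmetric])
  qed
  finally have L: "(\<Sum>k\<in>UNIV. Amat x k j * DLk F x k j) =
      Psi * s j / (2 * r0) * - (\<Sum>k\<in>UNIV. F$Some j$Some k * s k) + Psi * s j * F$None$Some j / 2"
    using c4 by simp
  have Ph: "Phi x = inverse r0 * Psi"
    by (simp add: Phi_def prod_opt r0_def Psi_def s_def)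
  have R: "(\<Sum>I\<in>UNIV. F$Some j$I * sqrt (chart x $ I)) = - F$None$Some j * r0 + (\<Sum>k\<in>UNIV. F$Some j$Some k * s k)"
    using skew[rule_format, of "Some j" None] by (simp add: sum_opt r0_def s_def)
  show ?thesis unfolding L R Ph s_def[symmetric] using r0
    by (simp add: field_simps)
qed



definition Gam :: "real^('m::finite option)^('m option) \<Rightarrow> real^'m \<Rightarrow> real^'m^'m" where
  "Gam F y = inverse (Phi y) *\<^sub>R (metric_coords y ** Pmat F y ** transpose (metric_coords y))"

definition gam :: "real^('m::finite option)^('m option) \<Rightarrow> real^('m option) \<Rightarrow> real^('m option) \<Rightarrow> real^('m option) \<Rightarrow> real" where
  "gam F q v w = (\<Sum>a\<in>UNIV. \<Sum>b\<in>UNIV. Gam F (chart_inv q) $ a $ b * v $ Some a * w $ Some b)"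

lemma chart_inv_chart [simp]: "chart_inv (chart x) = x"
  by (simp add: chart_inv_def chart_def vec_eq_iff)

lemma form2_gam: "form2_coords (gam F) x = Gam F x"
proof -
  have "(\<Sum>a\<in>UNIV. \<Sum>b\<in>UNIV. Gam F x $ a $ b * cbasis c $ Some a * cbasis d $ Some b) = Gam F x $ c $ d" for c d
    by (simp add: if_distrib[of "\<lambda>t. _ * t"] cong: if_cong)
  then show ?thesis by (simp add: form2_coords_def gam_def vec_eq_iff)
qed

lemma mat_scale_mid: "(A::real^'n::finite^'n) ** (c *\<^sub>R B) ** C = c *\<^sub>R (A ** B ** C)"
  by (simp add: matrix_matrix_mult_def sum_distrib_left mult_ac vec_eq_iff scaleR_sum_right sum_distrib_right)

lemma up_eq:
  assumes y: "y \<in> chart_domain"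
  shows "matrix_inv (metric_coords y) ** form2_coords (gam F) y ** transpose (matrix_inv (metric_coords y))
       = inverse (Phi y) *\<^sub>R Pmat F y"
proof -
  let ?g = "metric_coords y" and ?h = "matrix_inv (metric_coords y)"
  have l: "?h ** ?g = mat 1" by (rule matrix_inv_left[OF invertible_metric[OF y]])
  have "?h ** (?g ** Pmat F y ** transpose ?g) ** transpose ?h = (?h ** ?g) ** Pmat F y ** (transpose ?g ** transpose ?h)"
    by (simp add: matrix_mul_assoc)
  also have "\<dots> = Pmat F y"
    by (simp add: l matrix_transpose_mul[symmetric])
  finally show ?thesis
    unfolding form2_gam Gam_def mat_scale_mid by simp
qed

lemma Pmat_differentiable:
  assumes x: "x \<in> chart_domain"
  shows "(\<lambda>y. Pmat F y $ k $ j) differentiable (at x)"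
proof -
  obtain DA where DA: "((\<lambda>y. Amat y k j) has_derivative DA) (at x)"
    using Amat_deriv[OF x] by blast
  show ?thesis unfolding Pmat_def vec_lambda_beta
    by (rule differentiable_mult) (use DA Lmat_deriv[OF x] in \<open>auto simp: differentiable_def\<close>)
qed

lemma codiff_eq:
  fixes F :: "real^('m::finite option)^('m option)"
  assumes x: "x \<in> chart_domain"
  shows "codiff2_coords (gam F) x = metric_coords x *v (\<chi> j. - (1 / Phi x) * (\<Sum>k\<in>UNIV. Amat x k j * DLk F x k j))"
proof -
  have e: "frechet_derivative (\<lambda>y. sqrt (det (metric_coords y)) *
            (matrix_inv (metric_coords y) ** form2_coords (gam F) y ** transpose (matrix_inv (metric_coords y))) $ k $ j) (at x)
         = frechet_derivative (\<lambda>y. Pmat F y $ k $ j) (at x)" for k j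
  proof (rule sym, rule frechet_derivative_transform_within_open[OF Pmat_differentiable[OF x] open_chart_domain x])
    fix y :: "real^'m" assume y: "y \<in> chart_domain"
    show "Pmat F y $ k $ j = sqrt (det (metric_coords y)) *
            (matrix_inv (metric_coords y) ** form2_coords (gam F) y ** transpose (matrix_inv (metric_coords y))) $ k $ j"
      unfolding up_eq[OF y] vol_eq(1)[OF y] using vol_eq(2)[OF y] by simp
  qed
  show ?thesis
    unfolding codiff2_coords_def Let_def e Pmat_partial[OF x] vol_eq(1)[OF x] by simp
qed



lemma sqrtv_deriv:
  fixes q :: "real^'n::finite"
  assumes pos: "\<And>i. q $ i > 0"
  shows "(sqrtv has_derivative (\<lambda>h. \<chi> i. h$i * (inverse (sqrt (q$i)) / 2))) (at q)"
proof -
  have "((\<lambda>x. sqrtv x \<bullet> axis i 1) has_derivative (\<lambda>h. (\<chi> i. h$i * (inverse (sqrt (q$i)) / 2)) \<bullet> axis i 1)) (at q)" for i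
  proof -
    have "((\<lambda>x. sqrt (x $ i)) has_derivative (\<lambda>h. h$i * (inverse (sqrt (q$i)) / 2))) (at q)"
      by (rule DERIV_compose_FDERIV[OF DERIV_real_sqrt[OF pos] has_derivative_nth])
    then show ?thesis by (simp add: sqrtv_def inner_axis)
  qed
  then show ?thesis
    using has_derivative_componentwise_within[of sqrtv _ q UNIV]
    by (auto simp: Basis_vec_def axis_eq_axis)
qed

lemma frechet_sqrtv:
  fixes q :: "real^'n::finite"
  assumes pos: "\<And>i. q $ i > 0"
  shows "frechet_derivative sqrtv (at q) v = (\<chi> i. v$i * (inverse (sqrt (q$i)) / 2))"
proof -
  have "frechet_derivative sqrtv (at q) = (\<lambda>h. \<chi> i. h$i * (inverse (sqrt (q$i)) / 2))"
    by (rule frechet_derivative_at[OF sqrtv_deriv[OF pos], symmetric])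
  then show ?thesis by simp
qed

lemma simplex_pos: "q \<in> prob_simplex \<Longrightarrow> q $ i > 0"
  by (simp add: prob_simplex_def)

lemma inner_mat_skew:
  fixes F :: "real^'n::finite^'n"
  assumes "\<forall>a b. F$a$b = - F$b$a"
  shows "r \<bullet> (F *v r) = 0"
proof -
  have h1: "r \<bullet> (F *v r) = (\<Sum>a\<in>UNIV. \<Sum>b\<in>UNIV. r$a * F$a$b * r$b)"
    by (simp add: inner_vec_def matrix_vector_mult_def sum_distrib_left mult_ac)
  also have "\<dots> = (\<Sum>b\<in>UNIV. \<Sum>a\<in>UNIV. r$a * F$a$b * r$b)"
    by (rule sum.swap)
  also have "\<dots> = (\<Sum>b\<in>UNIV. \<Sum>a\<in>UNIV. - (r$b * F$b$a * r$a))"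
  proof (intro sum.cong refl)
    fix a b
    show "r$a * F$a$b * r$b = - (r$b * F$b$a * r$a)"
      using assms[rule_format, of a b] by simp
  qed
  also have "\<dots> = - (\<Sum>b\<in>UNIV. \<Sum>a\<in>UNIV. r$b * F$b$a * r$a)"
    by (simp add: sum_negf)
  finally show ?thesis using h1 by linarith
qed

lemma pullback_skew:
  fixes F :: "real^('m::finite option)^('m option)"
  assumes q: "q \<in> prob_simplex" and v: "v \<in> tangent_space" and skew: "\<forall>a b. F$a$b = - F$b$a"
  shows "pullback_form F q v = (\<Sum>a\<in>UNIV. ((F *v sqrtv q) $ Some a / (2 * sqrt (q $ Some a))
            - (F *v sqrtv q) $ None / (2 * sqrt (q $ None))) * v $ Some a)"
proof -
  let ?r = "sqrtv q"
  have v0: "v $ None = - (\<Sum>a\<in>UNIV. v $ Some a)"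
    using v by (simp add: tangent_space_def sum_opt eq_neg_iff_add_eq_0)
  have "pullback_form F q v = (\<chi> i. v$i * (inverse (sqrt (q$i)) / 2)) \<bullet> (F *v ?r)"
    unfolding pullback_form_def alpha_bar_def frechet_sqrtv[OF simplex_pos[OF q]]
      inner_mat_skew[OF skew] by simp
  also have "\<dots> = (\<Sum>i\<in>UNIV. v$i * (F *v ?r)$i / (2 * sqrt (q$i)))"
    by (simp add: inner_vec_def field_simps)
  also have "\<dots> = (\<Sum>a\<in>UNIV. ((F *v ?r) $ Some a / (2 * sqrt (q $ Some a))
            - (F *v ?r) $ None / (2 * sqrt (q $ None))) * v $ Some a)"
    unfolding sum_opt v0 by (simp add: sum_distrib_right sum_subtractf field_simps sum_negf[symmetric])
      (simp add: sum_negf sum_distrib_left sum_distrib_right sum_divide_distrib mult.commute)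
  finally show ?thesis .
qed



lemma chart_inv_simplex:
  assumes q: "q \<in> prob_simplex"
  shows "chart_inv q \<in> chart_domain" "chart (chart_inv q) = q"
proof -
  have pos: "\<And>i. q $ i > 0" and s: "q $ None + (\<Sum>k\<in>UNIV. q $ Some k) = 1"
    using q by (auto simp: prob_simplex_def sum_opt)
  show "chart_inv q \<in> chart_domain"
  proof -
    have "(\<Sum>k\<in>UNIV. q $ Some k) < 1" using pos[of None] s by linarith
    then show ?thesis using pos by (auto simp: chart_domain_def chart_inv_def)
  qed
  show "chart (chart_inv q) = q"
  proof (subst vec_eq_iff, rule allI)
    fix i show "chart (chart_inv q) $ i = q $ i"
      using s by (cases i) (auto simp: chart_def chart_inv_def)
  qed
qed

lemma sq_aux: "0 < t \<Longrightarrow> sqrt t * X / 2 / t = X / (2 * sqrt t)"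
proof -
  assume t: "0 < t"
  then have s: "sqrt t > 0" by simp
  have "sqrt t * X / 2 / t = sqrt t * X / 2 / (sqrt t * sqrt t)" using t by simp
  also have "\<dots> = X / (2 * sqrt t)" using s by (simp add: field_simps)
  finally show ?thesis .
qed

lemma codiff2_val:
  fixes F :: "real^('m::finite option)^('m option)"
  assumes q: "q \<in> prob_simplex" and skew: "\<forall>a b. F$a$b = - F$b$a" and card: "CARD('m) \<ge> 2"
  shows "codiff2 (gam F) q v = (\<Sum>a\<in>UNIV. ((F *v sqrtv q) $ Some a / (2 * sqrt (q $ Some a))
            - (F *v sqrtv q) $ None / (2 * sqrt (q $ None))) * v $ Some a)"
proof -
  define x where "x = chart_inv q"
  have x: "x \<in> chart_domain" and cx: "chart x = q" using chart_inv_simplex[OF q] by (auto simp: x_def)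
  define r where "r = sqrtv q"
  define H where "H = (\<chi> j. sqrt (x$j) * (\<Sum>I\<in>UNIV. F$Some j$I * sqrt (chart x $ I)) / 2)"
  have Ph: "Phi x > 0" using vol_eq(2)[OF x] .
  have c1: "codiff2_coords (gam F) x = metric_coords x *v H"
    unfolding codiff_eq[OF x] divergence[OF x skew card] H_def using Ph by (simp add: vec_eq_iff)
  have Fr: "(F *v r) $ i = (\<Sum>I\<in>UNIV. F$i$I * sqrt (q $ I))" for i
    by (simp add: r_def sqrtv_def matrix_vector_mult_def)
  have HFr: "H $ j = r $ Some j * (F *v r) $ Some j / 2" for j
    unfolding H_def Fr using cx by (simp add: r_def sqrtv_def x_def chart_inv_def)
  have pos: "\<And>i. q $ i > 0" using simplex_pos[OF q] .
  have z: "r \<bullet> (F *v r) = 0" using inner_mat_skew[OF skew] .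
  then have sH: "(\<Sum>b\<in>UNIV. H $ b) = - r $ None * (F *v r) $ None / 2"
    unfolding HFr by (simp add: inner_vec_def sum_opt sum_divide_distrib[symmetric] eq_neg_iff_add_eq_0 algebra_simps)
  have xq: "x $ b = q $ Some b" for b using cx by (metis chart_Some)
  have gH: "(metric_coords x *v H) $ a = (F *v r) $ Some a / (2 * sqrt (q $ Some a)) - (F *v r) $ None / (2 * sqrt (q $ None))" for a
  proof -
    have "(metric_coords x *v H) $ a = (\<Sum>b\<in>UNIV. ((if a = b then 1 / x$a else 0) + 1 / chart x $ None) * H $ b)"
      by (simp add: matrix_vector_mult_def metric_formula)
    also have "\<dots> = H $ a / x $ a + (\<Sum>b\<in>UNIV. H $ b) / chart x $ None"
      by (simp add: sum.distrib distrib_right sum_divide_distrib if_distrib[of "\<lambda>t. t * _"] cong: if_cong)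
    also have "\<dots> = (F *v r) $ Some a / (2 * sqrt (q $ Some a)) - (F *v r) $ None / (2 * sqrt (q $ None))"
    proof -
      have A: "H $ a / x $ a = (F *v r) $ Some a / (2 * sqrt (q $ Some a))"
        unfolding HFr xq using sq_aux[OF pos[of "Some a"]] by (simp add: r_def sqrtv_def)
      have B: "(\<Sum>b\<in>UNIV. H $ b) / chart x $ None = - ((F *v r) $ None / (2 * sqrt (q $ None)))"
        unfolding sH cx using sq_aux[OF pos[of None], of "(F *v r) $ None"] by (simp add: r_def sqrtv_def)
      show ?thesis unfolding A B by simp
    qed
    finally show ?thesis .
  qed
  show ?thesis
    unfolding codiff2_def x_def[symmetric] c1 gH r_def ..
qed



lemma part1:
  fixes S :: "real^'n::finite^'n"
  assumes sym: "transpose S = S" and q: "\<And>i. q $ i > 0" and v: "(\<Sum>i\<in>UNIV. v $ i) = 0"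
  shows "(\<lambda>p. (1/2) * (sqrtv p \<bullet> (S *v sqrtv p))) differentiable (at q)"
    "frechet_derivative (\<lambda>p. (1/2) * (sqrtv p \<bullet> (S *v sqrtv p))) (at q) v
       = alpha_bar S (sqrtv q) (frechet_derivative sqrtv (at q) v)"
proof -
  define D where "D = (\<lambda>h. \<chi> i. h$i * (inverse (sqrt (q$i)) / 2))"
  have dS: "(sqrtv has_derivative D) (at q)" unfolding D_def by (rule sqrtv_deriv[OF q])
  have dSv: "((\<lambda>p. S *v sqrtv p) has_derivative (\<lambda>h. S *v D h)) (at q)"
    by (rule bounded_linear.has_derivative[OF matrix_vector_mul_bounded_linear dS])
  have dU: "((\<lambda>p. (1/2) * (sqrtv p \<bullet> (S *v sqrtv p))) has_derivative
        (\<lambda>h. (1/2) * (sqrtv q \<bullet> (S *v D h) + D h \<bullet> (S *v sqrtv q)))) (at q)"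
    by (intro has_derivative_mult_right has_derivative_inner dS dSv)
  then show "(\<lambda>p. (1/2) * (sqrtv p \<bullet> (S *v sqrtv p))) differentiable (at q)"
    by (auto simp: differentiable_def)
  have fd: "frechet_derivative sqrtv (at q) v = D v"
    unfolding D_def by (rule frechet_sqrtv[OF q])
  have e1: "sqrtv q \<bullet> (S *v D v) = D v \<bullet> (S *v sqrtv q)"
  proof -
    have "sqrtv q \<bullet> (S *v D v) = (sqrtv q v* S) \<bullet> D v" by (simp add: dot_lmul_matrix)
    also have "\<dots> = (transpose S *v sqrtv q) \<bullet> D v" by simp
    finally show ?thesis using sym by (simp add: inner_commute)
  qed
  have e2: "D v \<bullet> sqrtv q = 0"
  proof -
    have "D v \<bullet> sqrtv q = (\<Sum>i\<in>UNIV. v $ i / 2)"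
    proof -
      have qn: "\<And>i. q$i \<noteq> 0" using q by (metis less_irrefl)
      show ?thesis unfolding D_def sqrtv_def inner_vec_def
        by (intro sum.cong refl) (simp add: field_simps qn)
    qed
    then show ?thesis using v by (simp add: sum_divide_distrib[symmetric])
  qed
  show "frechet_derivative (\<lambda>p. (1/2) * (sqrtv p \<bullet> (S *v sqrtv p))) (at q) v
       = alpha_bar S (sqrtv q) (frechet_derivative sqrtv (at q) v)"
    unfolding frechet_derivative_at[OF dU, symmetric] fd alpha_bar_def e1
    by (simp add: inner_diff_right e2)
qed

lemma Pmat_skew:
  fixes F :: "real^('m::finite option)^('m option)"
  assumes skew: "\<forall>a b. F$a$b = - F$b$a"
  shows "Pmat F y $ k $ j = - Pmat F y $ j $ k"
proof -
  have "Amat y k j = Amat y j k" by (simp add: Amat_def insert_commute)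
  moreover have "Lmat F y k j = - Lmat F y j k"
  proof -
    have d: "(P - Q) / c = - ((Q - P) / c)" for P Q c :: real
      by (simp add: minus_divide_left)
    show ?thesis
      using skew[rule_format, of "Some k" "Some j"]
      unfolding Lmat_def d[of "F$None$Some j * sqrt (y$k)"] by simp
  qed
  ultimately show ?thesis by (simp add: Pmat_def)
qed

lemma Gam_skew:
  fixes F :: "real^('m::finite option)^('m option)"
  assumes skew: "\<forall>a b. F$a$b = - F$b$a"
  shows "Gam F y $ a $ b = - Gam F y $ b $ a"
proof -
  let ?g = "metric_coords y" and ?P = "Pmat F y"
  have M: "(?g ** ?P ** transpose ?g) $ a $ b = (\<Sum>c\<in>UNIV. \<Sum>d\<in>UNIV. ?g$a$d * ?P$d$c * ?g$b$c)" for a b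
    by (simp add: matrix_matrix_mult_def transpose_def sum_distrib_right)
  have "(\<Sum>c\<in>UNIV. \<Sum>d\<in>UNIV. ?g$b$d * ?P$d$c * ?g$a$c) = (\<Sum>d\<in>UNIV. \<Sum>c\<in>UNIV. ?g$b$d * ?P$d$c * ?g$a$c)"
    by (rule sum.swap)
  also have "\<dots> = (\<Sum>d\<in>UNIV. \<Sum>c\<in>UNIV. - (?g$a$c * ?P$c$d * ?g$b$d))"
  proof (intro sum.cong refl)
    fix c d show "?g$b$d * ?P$d$c * ?g$a$c = - (?g$a$c * ?P$c$d * ?g$b$d)"
      using Pmat_skew[OF skew, of y d c] by simp
  qed
  also have "\<dots> = - (\<Sum>c\<in>UNIV. \<Sum>d\<in>UNIV. ?g$a$d * ?P$d$c * ?g$b$c)"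
    by (simp add: sum_negf)
  finally show ?thesis unfolding Gam_def by (simp add: M)
qed

lemma gam_skew:
  fixes F :: "real^('m::finite option)^('m option)"
  assumes skew: "\<forall>a b. F$a$b = - F$b$a"
  shows "gam F q v w = - gam F q w v"
proof -
  let ?G = "Gam F (chart_inv q)"
  have "gam F q w v = (\<Sum>b\<in>UNIV. \<Sum>a\<in>UNIV. ?G $ a $ b * w $ Some a * v $ Some b)"
    unfolding gam_def by (rule sum.swap)
  also have "\<dots> = (\<Sum>b\<in>UNIV. \<Sum>a\<in>UNIV. - (?G $ b $ a * v $ Some b * w $ Some a))"
  proof (intro sum.cong refl)
    fix a b show "?G $ a $ b * w $ Some a * v $ Some b = - (?G $ b $ a * v $ Some b * w $ Some a)"
      using Gam_skew[OF skew, of "chart_inv q" a b] by simp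
  qed
  also have "\<dots> = - gam F q v w"
    unfolding gam_def by (simp add: sum_negf)
  finally show ?thesis by simp
qed

lemma gam_bilinear: "bilinear (gam F q)"
  unfolding bilinear_def
proof (intro conjI allI)
  fix v show "linear (\<lambda>w. gam F q v w)"
    by (rule linearI) (simp_all add: gam_def algebra_simps sum.distrib sum_distrib_left)
next
  fix w show "linear (\<lambda>v. gam F q v w)"
    by (rule linearI) (simp_all add: gam_def algebra_simps sum.distrib sum_distrib_left)
qed



lemma Ck_uminus:
  fixes S :: "'a::euclidean_space set"
  assumes "open S" "Ck_on k S f" shows "Ck_on k S (\<lambda>x. - f x)"
proof -
  have "Ck_on k S (\<lambda>x. (-1) * f x)" by (intro Ck_mult[OF assms(1)] Ck_const[OF assms(1)] assms(2))
  then show ?thesis by simp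
qed

lemma Ck_diff:
  fixes S :: "'a::euclidean_space set"
  assumes "open S" "Ck_on k S f" "Ck_on k S g" shows "Ck_on k S (\<lambda>x. f x - g x)"
proof -
  have "Ck_on k S (\<lambda>x. f x + - g x)" by (intro Ck_add[OF assms(1)] Ck_uminus[OF assms(1)] assms(2,3))
  then show ?thesis by simp
qed

lemma Ck_divc:
  fixes S :: "'a::euclidean_space set"
  assumes "open S" "Ck_on k S f" shows "Ck_on k S (\<lambda>x. f x / c)"
proof -
  have "Ck_on k S (\<lambda>x. f x * inverse c)" by (intro Ck_mult[OF assms(1)] Ck_const[OF assms(1)] assms(2))
  then show ?thesis by (simp add: divide_inverse)
qed

lemma nth_pos: "x \<in> chart_domain \<Longrightarrow> 0 < x $ i"
  using chart_domain_pos[of x "Some i"] by simp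

lemma nth_ne: "x \<in> chart_domain \<Longrightarrow> x $ i \<noteq> 0"
  using nth_pos[of x i] by simp

lemma chart_ne: "x \<in> chart_domain \<Longrightarrow> chart x $ i \<noteq> 0"
  using chart_domain_pos[of x i] by simp

lemma Ck_nth: "Ck_on k (chart_domain :: (real^'m::finite) set) (\<lambda>y. y $ i)"
  by (rule Ck_linear[OF open_chart_domain bounded_linear_vec_nth])

lemma Ck_chart: "Ck_on k (chart_domain :: (real^'m::finite) set) (\<lambda>y. chart y $ i)"
proof (cases i)
  case None
  have "Ck_on k (chart_domain :: (real^'m::finite) set) (\<lambda>y. 1 + (-1) * (\<Sum>l\<in>UNIV. y $ l))"
    by (intro Ck_add[OF open_chart_domain] Ck_mult[OF open_chart_domain] Ck_const[OF open_chart_domain]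
        Ck_sum[OF open_chart_domain finite] Ck_nth)
  then show ?thesis using None by (simp add: chart_None)
next
  case (Some a)
  then show ?thesis using Ck_nth[of k a] by simp
qed

lemmas CkI = Ck_add[OF open_chart_domain] Ck_mult[OF open_chart_domain] Ck_uminus[OF open_chart_domain]
  Ck_diff[OF open_chart_domain] Ck_divc[OF open_chart_domain]
  Ck_inverse[OF open_chart_domain] Ck_sqrt[OF open_chart_domain]
  Ck_sum[OF open_chart_domain finite] Ck_prod[OF open_chart_domain finite] Ck_nth Ck_chart
  Ck_const[OF open_chart_domain]

lemma Ck_metric: "Ck_on k (chart_domain :: (real^'m::finite) set) (\<lambda>y. metric_coords y $ a $ b)"
proof -
  have "Ck_on k (chart_domain :: (real^'m::finite) set) (\<lambda>y. (if a = b then 1 else 0) * inverse (y$a) + inverse (chart y $ None))"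
    by (intro CkI) (auto dest: nth_pos chart_domain_pos[of _ None] simp: nth_ne chart_ne)
  moreover have "(\<lambda>y::real^'m. (if a = b then 1 else 0) * inverse (y$a) + inverse (chart y $ None)) = (\<lambda>y. metric_coords y $ a $ b)"
    by (auto simp: metric_formula divide_inverse fun_eq_iff)
  ultimately show ?thesis by simp
qed

lemma Ck_Phi_inv: "Ck_on k (chart_domain :: (real^'m::finite) set) (\<lambda>y. inverse (Phi y))"
  unfolding Phi_def
  by (intro CkI) (auto dest: chart_domain_pos simp: chart_ne)

lemma Ck_Pmat: "Ck_on k (chart_domain :: (real^'m::finite) set) (\<lambda>y. Pmat F y $ c $ d)"
  unfolding Pmat_def Amat_def Lmat_def vec_lambda_beta
  by (intro CkI) (auto dest: nth_pos chart_domain_pos simp: nth_ne chart_ne)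

lemma Ck_Gam: "Ck_on k (chart_domain :: (real^'m::finite) set) (\<lambda>y. Gam F y $ a $ b)"
proof -
  have "(\<lambda>y. Gam F y $ a $ b) = (\<lambda>y. inverse (Phi y) *
      (\<Sum>c\<in>UNIV. (\<Sum>d\<in>UNIV. metric_coords y $ a $ d * Pmat F y $ d $ c) * metric_coords y $ b $ c))"
    by (simp add: Gam_def matrix_matrix_mult_def transpose_def fun_eq_iff)
  moreover have "Ck_on k (chart_domain :: (real^'m::finite) set) (\<lambda>y. inverse (Phi y) *
      (\<Sum>c\<in>UNIV. (\<Sum>d\<in>UNIV. metric_coords y $ a $ d * Pmat F y $ d $ c) * metric_coords y $ b $ c))"
    by (intro Ck_mult[OF open_chart_domain] Ck_sum[OF open_chart_domain finite] Ck_Phi_inv Ck_metric Ck_Pmat)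
  ultimately show ?thesis by simp
qed

lemma gam_is_2form:
  fixes F :: "real^('m::finite option)^('m option)"
  assumes skew: "\<forall>a b. F$a$b = - F$b$a"
  shows "is_2form (gam F)"
  unfolding is_2form_def smooth_on_def form2_gam
  using gam_bilinear gam_skew[OF skew] Ck_Gam by blast



theorem mainTheorem1:
  fixes V :: "real^('m::finite option)^('m option)"
  assumes "CARD('m) \<ge> 2"
  shows "(\<forall>q\<in>prob_simplex.
            (\<lambda>p. (1/2) * (sqrtv p \<bullet> (sym_part V *v sqrtv p))) differentiable (at q) \<and>
            (\<forall>v\<in>tangent_space.
               frechet_derivative (\<lambda>p. (1/2) * (sqrtv p \<bullet> (sym_part V *v sqrtv p))) (at q) v
                 = pullback_form (sym_part V) q v))
       \<and> (\<exists>\<gamma>. is_2form \<gamma> \<and>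
            (\<forall>q\<in>prob_simplex. \<forall>v\<in>tangent_space.
               pullback_form (skew_part V) q v = codiff2 \<gamma> q v) \<and>
            (\<forall>q\<in>prob_simplex. \<forall>v\<in>tangent_space.
               pullback_form V q v
                 = frechet_derivative (\<lambda>p. (1/2) * (sqrtv p \<bullet> (sym_part V *v sqrtv p))) (at q) v
                   + codiff2 \<gamma> q v))"
proof -
  let ?S = "sym_part V" and ?F = "skew_part V"
  let ?U = "\<lambda>p. (1/2) * (sqrtv p \<bullet> (?S *v sqrtv p))"
  have sym: "transpose ?S = ?S"
    by (simp add: sym_part_def vec_eq_iff transpose_def)
  have skew: "\<forall>a b. ?F$a$b = - ?F$b$a"
    by (simp add: skew_part_def transpose_def field_simps)
  have SF: "V = ?S + ?F"
    by (simp add: sym_part_def skew_part_def vec_eq_iff field_simps)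
  have P1: "?U differentiable (at q) \<and> frechet_derivative ?U (at q) v = pullback_form ?S q v"
    if q: "q \<in> prob_simplex" and v: "v \<in> tangent_space" for q v
    using part1[OF sym simplex_pos[OF q]] v by (simp add: tangent_space_def pullback_form_def)
  have P1': "?U differentiable (at q)" if q: "q \<in> prob_simplex" for q
    using part1[OF sym simplex_pos[OF q], of 0] by simp
  have P2: "pullback_form ?F q v = codiff2 (gam ?F) q v"
    if q: "q \<in> prob_simplex" and v: "v \<in> tangent_space" for q v
    unfolding pullback_skew[OF q v skew] codiff2_val[OF q skew assms] ..
  have lin: "pullback_form V q v = pullback_form ?S q v + pullback_form ?F q v" for q v
    unfolding pullback_form_def alpha_bar_def
    by (subst (1 2) SF) (simp add: matrix_vector_mult_add_rdistrib inner_add_right inner_diff_right algebra_simps)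
  show ?thesis
  proof (intro conjI ballI exI[of _ "gam ?F"])
    show "is_2form (gam ?F)" by (rule gam_is_2form[OF skew])
  next
    fix q :: "real^'m option" assume "q \<in> prob_simplex" then show "?U differentiable (at q)" by (rule P1')
  next
    fix q v :: "real^'m option" assume "q \<in> prob_simplex" "v \<in> tangent_space"
    then show "frechet_derivative ?U (at q) v = pullback_form ?S q v" using P1 by blast
  next
    fix q v :: "real^'m option" assume "q \<in> prob_simplex" "v \<in> tangent_space"
    then show "pullback_form ?F q v = codiff2 (gam ?F) q v" by (rule P2)
  next
    fix q v :: "real^'m option" assume "q \<in> prob_simplex" "v \<in> tangent_space"
    then show "pullback_form V q v = frechet_derivative ?U (at q) v + codiff2 (gam ?F) q v"
      using P1 P2 lin by simp
  qed
qed

end
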